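(* Let $G$ be a Lie group of dimension $n$ with Lie algebra $\mathfrak{g}$, let $D$ be a left-invariant completely nonholonomic distribution on $G$ of rank $m$, $2\le m<n$, with a left-invariant inner product $\langle\cdot,\cdot\rangle$ (defining a left-invariant sub-Riemannian metric $d$), and let $D^{\perp}$ be a left-invariant rigging of $D$ such that $[\mathfrak{g},\mathfrak{g}]\subset D^{\perp}(e)$. Then all Solov'ev curvatures (sectional, Ricci and scalar) of $(D,\langle\cdot,\cdot\rangle)$ with respect to the rigging $D^{\perp}$ are equal to zero.
   Context: A rigging of $D$ is a distribution $D^\perp$ with $D\oplus D^\perp=TG$. Solov'ev curvatures: choose a left-invariant Riemannian metric $(\cdot,\cdot)$ on $G$ with $(\cdot,\cdot)|_D=\langle\cdot,\cdot\rangle$ and $(D,D^{\perp})=0$; let $\nabla$ be its Levi-Civita connection and $H,V$ the projections onto $D,D^{\perp}$. Put $\overline{\nabla}_XY=H\nabla_X(HY)+V\nabla_X(VY)$, with torsion $T(X,Y)=\overline{\nabla}_XY-\overline{\nabla}_YX-[X,Y]$ and curvature $\overline{R}(X,Y)=\overline{\nabla}_X\overline{\nabla}_Y-\overline{\nabla}_Y\overline{\nabla}_X-\overline{\nabla}_{[X,Y]}$. The curvature tensor $K$ of $D$ is given for $X,Y,Z,W$ tangent to $D$ by $(K(X,Y)Z,W)=(\overline{R}(X,Y)Z,W)-\tfrac12(T(X,Y),T(Z,W))$. The sectional curvature for non-collinear $u,v\in D(p)$ is $K_{uv}=(K(u,v)v,u)/(\|u\|^2\|v\|^2-(u,v)^2)$;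 the Ricci curvature in direction of a unit $w\in D(p)$ is $\sum_i K_{w e_i}$ over an orthonormal basis $e_i$ of $w^\perp\cap D(p)$, and the scalar curvature is the sum of the Ricci curvatures over an orthonormal basis of $D(p)$. *)

theory Defs
  imports "HOL-Analysis.Analysis"
begin

text \<open>Everything is stated at the level of the Lie algebra g = T_e G, modelled by a
finite-dimensional real inner product space 'a (euclidean_space). Its inner product
is the chosen left-invariant Riemannian metric (.,.) extending the sub-Riemannian
inner product on D(e). Left-invariant vector fields are identified with their values
at e; the Levi-Civita connection of a left-invariant metric on left-invariant fields
is given by the Koszul formula in terms of the Lie bracket.\<close>

definition lie_bracket :: "('a::real_vector \<Rightarrow> 'a \<Rightarrow> 'a) \<Rightarrow> bool" where
  "lie_bracket br \<longleftrightarrow>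
     (\<forall>y. linear (\<lambda>x. br x y)) \<and> (\<forall>x. linear (\<lambda>y. br x y)) \<and>
     (\<forall>x. br x x = 0) \<and>
     (\<forall>x y z. br x (br y z) + br y (br z x) + br z (br x y) = 0)"

inductive_set iter_brackets :: "('a \<Rightarrow> 'a \<Rightarrow> 'a) \<Rightarrow> 'a set \<Rightarrow> 'a set"
  for br D where
  base: "x \<in> D \<Longrightarrow> x \<in> iter_brackets br D"
| step: "x \<in> iter_brackets br D \<Longrightarrow> y \<in> iter_brackets br D \<Longrightarrow> br x y \<in> iter_brackets br D"

text \<open>A left-invariant distribution is completely nonholonomic iff D(e) generates g
as a Lie algebra.\<close>
definition bracket_generating :: "('a::real_vector \<Rightarrow> 'a \<Rightarrow> 'a) \<Rightarrow> 'a set \<Rightarrow> bool" where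
  "bracket_generating br D \<longleftrightarrow> span (iter_brackets br D) = UNIV"

text \<open>Levi-Civita connection on left-invariant fields (Koszul formula).\<close>
definition lc_nabla :: "('a::euclidean_space \<Rightarrow> 'a \<Rightarrow> 'a) \<Rightarrow> 'a \<Rightarrow> 'a \<Rightarrow> 'a" where
  "lc_nabla br X Y = (\<Sum>b\<in>Basis.
      ((1/2) * (inner (br X Y) b - inner (br Y b) X + inner (br b X) Y)) *\<^sub>R b)"

definition proj_along :: "'a::real_vector set \<Rightarrow> 'a set \<Rightarrow> 'a \<Rightarrow> 'a" where
  "proj_along A B x = (THE a. a \<in> A \<and> x - a \<in> B)"

definition nabla_bar :: "('a::euclidean_space \<Rightarrow> 'a \<Rightarrow> 'a) \<Rightarrow> 'a set \<Rightarrow> 'a set \<Rightarrow> 'a \<Rightarrow> 'a \<Rightarrow> 'a" where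
  "nabla_bar br D Dp X Y =
     proj_along D Dp (lc_nabla br X (proj_along D Dp Y)) +
     proj_along Dp D (lc_nabla br X (proj_along Dp D Y))"

definition torsion_bar :: "('a::euclidean_space \<Rightarrow> 'a \<Rightarrow> 'a) \<Rightarrow> 'a set \<Rightarrow> 'a set \<Rightarrow> 'a \<Rightarrow> 'a \<Rightarrow> 'a" where
  "torsion_bar br D Dp X Y = nabla_bar br D Dp X Y - nabla_bar br D Dp Y X - br X Y"

definition curv_bar :: "('a::euclidean_space \<Rightarrow> 'a \<Rightarrow> 'a) \<Rightarrow> 'a set \<Rightarrow> 'a set \<Rightarrow> 'a \<Rightarrow> 'a \<Rightarrow> 'a \<Rightarrow> 'a" where
  "curv_bar br D Dp X Y Z =
     nabla_bar br D Dp X (nabla_bar br D Dp Y Z) - nabla_bar br D Dp Y (nabla_bar br D Dp X Z)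
     - nabla_bar br D Dp (br X Y) Z"

definition K_form :: "('a::euclidean_space \<Rightarrow> 'a \<Rightarrow> 'a) \<Rightarrow> 'a set \<Rightarrow> 'a set \<Rightarrow> 'a \<Rightarrow> 'a \<Rightarrow> 'a \<Rightarrow> 'a \<Rightarrow> real" where
  "K_form br D Dp X Y Z W =
     inner (curv_bar br D Dp X Y Z) W - (1/2) * inner (torsion_bar br D Dp X Y) (torsion_bar br D Dp Z W)"

definition sectional_curv :: "('a::euclidean_space \<Rightarrow> 'a \<Rightarrow> 'a) \<Rightarrow> 'a set \<Rightarrow> 'a set \<Rightarrow> 'a \<Rightarrow> 'a \<Rightarrow> real" where
  "sectional_curv br D Dp u v =
     K_form br D Dp u v v u / ((norm u)\<^sup>2 * (norm v)\<^sup>2 - (inner u v)\<^sup>2)"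

definition noncollinear :: "'a::real_vector \<Rightarrow> 'a \<Rightarrow> bool" where
  "noncollinear u v \<longleftrightarrow> (\<forall>a b. a *\<^sub>R u + b *\<^sub>R v = 0 \<longrightarrow> a = 0 \<and> b = 0)"

definition orthonormal_basis_of :: "'a::euclidean_space set \<Rightarrow> 'a set \<Rightarrow> bool" where
  "orthonormal_basis_of S E \<longleftrightarrow>
     finite E \<and> E \<subseteq> S \<and> (\<forall>e\<in>E. norm e = 1) \<and> pairwise orthogonal E \<and> span E = S"

text \<open>Ricci curvature in direction w, computed with an orthonormal basis E of w^perp \<inter> D.\<close>
definition ricci_curv :: "('a::euclidean_space \<Rightarrow> 'a \<Rightarrow> 'a) \<Rightarrow> 'a set \<Rightarrow> 'a set \<Rightarrow> 'a \<Rightarrow> 'a set \<Rightarrow> real" where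
  "ricci_curv br D Dp w E = (\<Sum>e\<in>E. sectional_curv br D Dp w e)"

end

theory Submission
  imports Defs
begin

lemma lc_inner:
  assumes "lie_bracket br"
  shows "inner (lc_nabla br X Y) Z =
    (1/2) * (inner (br X Y) Z - inner (br Y Z) X + inner (br Z X) Y)"
proof -
  define f where "f b = (1/2) * (inner (br X Y) b - inner (br Y b) X + inner (br b X) Y)" for b
  have l1: "linear (\<lambda>b. br Y b)" and l2: "linear (\<lambda>b. br b X)"
    using assms unfolding lie_bracket_def by auto
  have lf: "linear f"
  proof (rule linearI)
    fix a b :: 'a and c :: real
    show "f (a + b) = f a + f b" unfolding f_def
      using linear_add[OF l1] linear_add[OF l2]
      by (simp add: inner_add_left inner_add_right algebra_simps)
    show "f (c *\<^sub>R a) = c *\<^sub>R f a" unfolding f_def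
      using linear_scale[OF l1] linear_scale[OF l2]
      by (simp add: algebra_simps)
  qed
  have "inner (lc_nabla br X Y) Z = (\<Sum>b\<in>Basis. f b * inner b Z)"
    unfolding lc_nabla_def f_def by (simp add: inner_sum_left)
  also have "\<dots> = f (\<Sum>b\<in>Basis. inner Z b *\<^sub>R b)"
    using lf by (simp add: linear_sum linear_scale inner_commute mult.commute)
  also have "\<dots> = f Z" by (simp add: euclidean_representation)
  finally show ?thesis by (simp add: f_def)
qed


lemma proj_eq:
  assumes "A \<inter> B = {0}" "subspace A" "subspace B" "a \<in> A" "x - a \<in> B"
  shows "proj_along A B x = a"
  unfolding proj_along_def
proof (rule the_equality)
  show "a \<in> A \<and> x - a \<in> B" using assms by auto
  fix a' assume h: "a' \<in> A \<and> x - a' \<in> B"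
  have "a' - a \<in> A" using h assms by (simp add: subspace_diff)
  moreover have "a' - a \<in> B"
    using subspace_diff[OF assms(3) assms(5), of "x - a'"] h by (simp add: algebra_simps)
  ultimately have "a' - a \<in> A \<inter> B" by blast
  then show "a' = a" using assms(1) by auto
qed

lemma proj_prop:
  assumes "A \<inter> B = {0}" "subspace A" "subspace B" "\<forall>x. \<exists>d\<in>A. \<exists>p\<in>B. x = d + p"
  shows "proj_along A B x \<in> A \<and> x - proj_along A B x \<in> B"
proof -
  obtain d p where "d \<in> A" "p \<in> B" "x = d + p" using assms(4) by blast
  then have "proj_along A B x = d" using proj_eq[OF assms(1-3)] by simp
  then show ?thesis using \<open>d \<in> A\<close> \<open>p \<in> B\<close> \<open>x = d + p\<close> by simp
qed

theorem proposition3: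
  fixes br :: "'a::euclidean_space \<Rightarrow> 'a \<Rightarrow> 'a"
    and D Dp :: "'a set"
  assumes "lie_bracket br"
    and "subspace D" and "subspace Dp"
    and "D \<inter> Dp = {0}" and "\<forall>x. \<exists>d\<in>D. \<exists>p\<in>Dp. x = d + p"
    and "\<forall>d\<in>D. \<forall>p\<in>Dp. inner d p = 0"
    and "2 \<le> dim D" and "dim D < DIM('a)"
    and "bracket_generating br D"
    and "\<forall>x y. br x y \<in> Dp"
  shows "(\<forall>u\<in>D. \<forall>v\<in>D. noncollinear u v \<longrightarrow> sectional_curv br D Dp u v = 0)
       \<and> (\<forall>w\<in>D. \<forall>E. norm w = 1 \<longrightarrow> orthonormal_basis_of {v\<in>D. inner v w = 0} E
              \<longrightarrow> ricci_curv br D Dp w E = 0)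
       \<and> (\<forall>B Es. orthonormal_basis_of D B
              \<longrightarrow> (\<forall>b\<in>B. orthonormal_basis_of {v\<in>D. inner v b = 0} (Es b))
              \<longrightarrow> (\<Sum>b\<in>B. ricci_curv br D Dp b (Es b)) = 0)"
proof -
  note lb = assms(1)
  have D0: "D \<inter> Dp = {0}" "Dp \<inter> D = {0}" using assms(4) by auto
  have dec2: "\<forall>x. \<exists>d\<in>Dp. \<exists>p\<in>D. x = d + p" using assms(5) by (metis add.commute)
  have orth: "\<And>d p. d \<in> D \<Longrightarrow> p \<in> Dp \<Longrightarrow> inner d p = 0" "\<And>d p. d \<in> D \<Longrightarrow> p \<in> Dp \<Longrightarrow> inner p d = 0"
    using assms(6) by (auto simp: inner_commute)
  have brD: "\<And>x y d. d \<in> D \<Longrightarrow> inner (br x y) d = 0" "\<And>x y d. d \<in> D \<Longrightarrow> inner d (br x y) = 0"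
    using orth assms(10) by auto
  have br0: "br x 0 = 0" "br 0 x = 0" for x
    using lb unfolding lie_bracket_def by (auto intro: linear_0)
  have HD: "proj_along D Dp d = d" if "d \<in> D" for d
    using proj_eq[OF D0(1) assms(2,3) that] assms(3) by (simp add: subspace_0)
  have VD: "proj_along Dp D d = 0" if "d \<in> D" for d
    using proj_eq[OF D0(2) assms(3,2), of 0 d] assms(3) that by (simp add: subspace_0)
  have H0: "proj_along D Dp 0 = 0" using HD assms(2) by (simp add: subspace_0)
  have V0: "proj_along Dp D 0 = 0" using VD assms(2) by (simp add: subspace_0)
  have Hp: "proj_along D Dp x \<in> D \<and> x - proj_along D Dp x \<in> Dp" for x
    using proj_prop[OF D0(1) assms(2,3,5)] .
  have Hinner: "inner (proj_along D Dp x) w = inner x w" if "w \<in> D" for x w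
  proof -
    have "inner (x - proj_along D Dp x) w = 0" using Hp[of x] orth(2)[OF that] by blast
    then show ?thesis by (simp add: inner_diff_left)
  qed
  have Hzero: "proj_along D Dp x = 0" if "\<And>d. d \<in> D \<Longrightarrow> inner x d = 0" for x
  proof -
    have "inner (proj_along D Dp x) (proj_along D Dp x) = 0"
      using Hinner[of "proj_along D Dp x" x] Hp[of x] that by auto
    then show ?thesis by simp
  qed
  have lc0: "lc_nabla br X 0 = 0" for X
  proof -
    have "inner (lc_nabla br X 0) (lc_nabla br X 0) = 0"
      using lc_inner[OF lb, of X 0 "lc_nabla br X 0"] br0 by simp
    then show ?thesis by simp
  qed
  have nb0: "nabla_bar br D Dp X 0 = 0" for X
    unfolding nabla_bar_def using H0 V0 lc0 by simp
  have nbD: "nabla_bar br D Dp Y Z = proj_along D Dp (lc_nabla br Y Z)" if "Z \<in> D" for Y Z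
    unfolding nabla_bar_def using HD[OF that] VD[OF that] lc0 V0 by simp
  have nbDD: "nabla_bar br D Dp Y Z = 0" if "Y \<in> D" "Z \<in> D" for Y Z
    unfolding nbD[OF that(2)]
    by (rule Hzero) (simp add: lc_inner[OF lb] brD that)
  have K0: "K_form br D Dp X Y Z W = 0" if "X \<in> D" "Y \<in> D" "Z \<in> D" "W \<in> D" for X Y Z W
  proof -
    have c: "inner (curv_bar br D Dp X Y Z) W = (1/2) * inner (br Z W) (br X Y)"
      unfolding curv_bar_def using that
      by (simp add: nbDD nb0 nbD inner_diff_left Hinner lc_inner[OF lb] brD)
    have t1: "torsion_bar br D Dp X Y = - br X Y" unfolding torsion_bar_def using that by (simp add: nbDD)
    have t2: "torsion_bar br D Dp Z W = - br Z W" unfolding torsion_bar_def using that by (simp add: nbDD)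
    show ?thesis unfolding K_form_def c t1 t2 by (simp add: inner_commute)
  qed
  have S0: "sectional_curv br D Dp u v = 0" if "u \<in> D" "v \<in> D" for u v
    unfolding sectional_curv_def using K0 that by simp
  have R0: "ricci_curv br D Dp w E = 0" if "w \<in> D" "E \<subseteq> D" for w E
    unfolding ricci_curv_def using S0 that by (simp add: subset_iff)
  show ?thesis
  proof (intro conjI ballI allI impI)
    show "sectional_curv br D Dp u v = 0" if "u \<in> D" "v \<in> D" for u v using S0 that by simp
    show "ricci_curv br D Dp w E = 0" if "w \<in> D" "orthonormal_basis_of {v \<in> D. inner v w = 0} E" for w E
      using R0 that unfolding orthonormal_basis_of_def by auto
    show "(\<Sum>b\<in>B. ricci_curv br D Dp b (Es b)) = 0"
      if "orthonormal_basis_of D B" "\<forall>b\<in>B. orthonormal_basis_of {v \<in> D. inner v b = 0} (Es b)" for B Es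
    proof (rule sum.neutral, rule ballI)
      fix b assume "b \<in> B"
      then show "ricci_curv br D Dp b (Es b) = 0" using R0 that unfolding orthonormal_basis_of_def by blast
    qed
  qed
qed

end
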